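(* Let $k$ and $r$ be integers with $k\ge r\ge 0$ and $r\ne 1$, and let $d=\gcd(r-1,k)$. Let $D$ be a strongly connected digraph such that every directed cycle of $D$ has length congruent to $r$ modulo $k$. If $k/d$ is even, then $\chi_A(D)\le 2$.
   Context: Digraphs are finite and loopless; cycles are directed. $\chi_A(D)$ is the minimum number of colors in a vertex coloring of $D$ in which every color class induces an acyclic subdigraph. *)

theory Defs
  imports Main
begin

definition digraph :: "'a set \<Rightarrow> ('a \<times> 'a) set \<Rightarrow> bool" where
  "digraph V A \<longleftrightarrow> finite V \<and> A \<subseteq> V \<times> V \<and> (\<forall>v. (v, v) \<notin> A)"

definition dcycle :: "'a set \<Rightarrow> ('a \<times> 'a) set \<Rightarrow> 'a list \<Rightarrow> bool" where
  "dcycle V A cs \<longleftrightarrow> cs \<noteq> [] \<and> distinct cs \<and> set cs \<subseteq> V \<and>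
     (\<forall>i < length cs. (cs ! i, cs ! ((i + 1) mod length cs)) \<in> A)"

definition strongly_connected :: "'a set \<Rightarrow> ('a \<times> 'a) set \<Rightarrow> bool" where
  "strongly_connected V A \<longleftrightarrow> V \<noteq> {} \<and> (\<forall>u\<in>V. \<forall>v\<in>V. (u, v) \<in> A\<^sup>*)"

definition induced_arcs :: "('a \<times> 'a) set \<Rightarrow> 'a set \<Rightarrow> ('a \<times> 'a) set" where
  "induced_arcs A S = A \<inter> (S \<times> S)"

definition acyclic_digraph :: "'a set \<Rightarrow> ('a \<times> 'a) set \<Rightarrow> bool" where
  "acyclic_digraph V A \<longleftrightarrow> (\<nexists>cs. dcycle V A cs)"

definition acyclic_coloring :: "'a set \<Rightarrow> ('a \<times> 'a) set \<Rightarrow> ('a \<Rightarrow> nat) \<Rightarrow> nat \<Rightarrow> bool" where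
  "acyclic_coloring V A c m \<longleftrightarrow> (\<forall>v\<in>V. c v < m) \<and>
     (\<forall>i < m. acyclic_digraph {v\<in>V. c v = i} (induced_arcs A {v\<in>V. c v = i}))"

definition dichromatic_number :: "'a set \<Rightarrow> ('a \<times> 'a) set \<Rightarrow> nat" where
  "dichromatic_number V A = (LEAST m. \<exists>c. acyclic_coloring V A c m)"

end

theory Submission
  imports Defs
begin

definition is_path :: "('a \<times> 'a) set \<Rightarrow> 'a list \<Rightarrow> bool" where
  "is_path A p \<longleftrightarrow> p \<noteq> [] \<and> distinct p \<and> (\<forall>i. Suc i < length p \<longrightarrow> (p!i, p!Suc i) \<in> A)"

lemma is_path_mono: "is_path A p \<Longrightarrow> A \<subseteq> B \<Longrightarrow> is_path B p"
  unfolding is_path_def by blast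

lemma is_path_drop: "is_path A p \<Longrightarrow> j < length p \<Longrightarrow> is_path A (drop j p)"
  unfolding is_path_def by auto

lemma is_path_butlast: "is_path A p \<Longrightarrow> (\<forall>i. Suc i < length (butlast p) \<longrightarrow> (butlast p!i, butlast p!Suc i) \<in> A)"
  unfolding is_path_def by (auto simp: nth_butlast)

lemma is_path_snoc: "is_path A p \<Longrightarrow> (last p, w) \<in> A \<Longrightarrow> w \<notin> set p \<Longrightarrow> is_path A (p @ [w])"
  unfolding is_path_def
  apply (auto simp: nth_append)
  by (metis Suc_lessI last_conv_nth length_greater_0_conv diff_Suc_1)

lemma dfs:
  "finite V \<Longrightarrow> A \<subseteq> V \<times> V \<Longrightarrow> (\<forall>v. (v,v) \<notin> A) \<Longrightarrow> (P = [] \<or> is_path A P) \<Longrightarrow> set P \<subseteq> V \<Longrightarrow> distinct P \<Longrightarrow>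
   \<exists>(\<sigma>::'a \<Rightarrow> nat) (h::'a \<Rightarrow> int). (\<forall>i<length P. h (P!i) = int i) \<and>
     (\<forall>u w. (u,w) \<in> A \<longrightarrow> \<sigma> w \<le> \<sigma> u \<longrightarrow>
        (\<exists>p. is_path A p \<and> hd p = w \<and> last p = u \<and> set p \<subseteq> V \<and> int (length p) - 1 = h u - h w))"
proof (induction "2 * card V - length P" arbitrary: V A P rule: less_induct)
  case less
  have cP: "length P \<le> card V" using less.prems distinct_card card_mono by metis
  show ?case
  proof (cases "P = []")
    case True
    show ?thesis
    proof (cases "V = {}")
      case True
      then have "A = {}" using less.prems by auto
      then show ?thesis using \<open>P = []\<close> by auto
    next
      case False
      then obtain v where v: "v \<in> V" by auto
      have "card V > 0" using False less.prems(1) by (simp add: card_gt_0_iff)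
      then have m: "2 * card V - length [v] < 2 * card V - length P" using True by simp
      have "is_path A [v]" unfolding is_path_def by simp
      have ex: "\<exists>(\<sigma>::'a \<Rightarrow> nat) (h::'a \<Rightarrow> int). (\<forall>i<length [v]. h ([v]!i) = int i) \<and>
     (\<forall>u w. (u,w) \<in> A \<longrightarrow> \<sigma> w \<le> \<sigma> u \<longrightarrow>
        (\<exists>p. is_path A p \<and> hd p = w \<and> last p = u \<and> set p \<subseteq> V \<and> int (length p) - 1 = h u - h w))"
        using less.hyps[OF m less.prems(1-3)] \<open>is_path A [v]\<close> v by simp
      from ex obtain \<sigma> :: "'a \<Rightarrow> nat" and h :: "'a \<Rightarrow> int" where
        "\<forall>u w. (u,w) \<in> A \<longrightarrow> \<sigma> w \<le> \<sigma> u \<longrightarrow>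
        (\<exists>p. is_path A p \<and> hd p = w \<and> last p = u \<and> set p \<subseteq> V \<and> int (length p) - 1 = h u - h w)"
        by blast
      then show ?thesis using True by (intro exI[of _ \<sigma>] exI[of _ h]) simp
    qed
  next
    case Pne: False
    define vm where "vm = last P"
    have pathP: "is_path A P" using Pne less.prems by auto
    have vmV: "vm \<in> V" using Pne less.prems(5) vm_def by auto
    show ?thesis
    proof (cases "\<exists>w. (vm, w) \<in> A \<and> w \<notin> set P")
      case True
      then obtain w where w: "(vm, w) \<in> A" "w \<notin> set P" by auto
      have wV: "w \<in> V" using w less.prems(2) by auto
      have "card V > 0" using vmV less.prems(1) card_gt_0_iff by blast
      then have m: "2 * card V - length (P @ [w]) < 2 * card V - length P" using cP by simp
      have pw: "is_path A (P @ [w])" using is_path_snoc[OF pathP] w vm_def by auto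
      have ex: "\<exists>(\<sigma>::'a \<Rightarrow> nat) (h::'a \<Rightarrow> int). (\<forall>i<length (P@[w]). h ((P@[w])!i) = int i) \<and>
     (\<forall>u w. (u,w) \<in> A \<longrightarrow> \<sigma> w \<le> \<sigma> u \<longrightarrow>
        (\<exists>p. is_path A p \<and> hd p = w \<and> last p = u \<and> set p \<subseteq> V \<and> int (length p) - 1 = h u - h w))"
        using less.hyps[OF m less.prems(1-3)] pw wV less.prems(5,6) w by simp
      from ex obtain \<sigma> :: "'a \<Rightarrow> nat" and h :: "'a \<Rightarrow> int" where
        h1: "\<forall>i<length (P@[w]). h ((P@[w])!i) = int i" and
        h2: "\<forall>u w. (u,w) \<in> A \<longrightarrow> \<sigma> w \<le> \<sigma> u \<longrightarrow>
        (\<exists>p. is_path A p \<and> hd p = w \<and> last p = u \<and> set p \<subseteq> V \<and> int (length p) - 1 = h u - h w)"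
        by blast
      have "\<forall>i<length P. h (P!i) = int i"
      proof (intro allI impI)
        fix i assume "i < length P"
        then show "h (P!i) = int i" using h1[rule_format, of i] by (simp add: nth_append)
      qed
      then show ?thesis using h2 by blast
    next
      case False
      define V' where "V' = V - {vm}"
      define A' where "A' = A \<inter> (V' \<times> V')"
      define P' where "P' = butlast P"
      have PP': "P = P' @ [vm]" using Pne P'_def vm_def by simp
      have dP': "distinct P'" and vmP': "vm \<notin> set P'" using less.prems(6) PP' by auto
      have sP': "set P' \<subseteq> V'" using less.prems(5) PP' vmP' V'_def by auto
      have pP': "P' = [] \<or> is_path A' P'"
      proof (cases "P' = []")
        case False
        have "\<forall>i. Suc i < length P' \<longrightarrow> (P'!i, P'!Suc i) \<in> A'"
        proof (intro allI impI)
          fix i assume i: "Suc i < length P'"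
          have "(P'!i, P'!Suc i) \<in> A" using is_path_butlast[OF pathP] i P'_def by auto
          moreover have "P'!i \<in> V'" "P'!Suc i \<in> V'" using sP' i by auto
          ultimately show "(P'!i, P'!Suc i) \<in> A'" using A'_def by auto
        qed
        then show ?thesis using False dP' unfolding is_path_def by auto
      qed simp
      have cV': "card V' = card V - 1" using V'_def vmV less.prems(1) by simp
      have "card V > 0" using vmV less.prems(1) card_gt_0_iff by blast
      then have m: "2 * card V' - length P' < 2 * card V - length P" using cV' PP' cP by simp
      have fV': "finite V'" using V'_def less.prems(1) by simp
      have A'V: "A' \<subseteq> V' \<times> V'" using A'_def by auto
      have lA': "\<forall>v. (v,v) \<notin> A'" using A'_def less.prems(3) by auto
      from less.hyps[OF m fV' A'V lA' pP' sP' dP'] obtain \<sigma>' :: "'a \<Rightarrow> nat" and h' :: "'a \<Rightarrow> int" where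
        h1: "\<forall>i<length P'. h' (P'!i) = int i" and
        h2: "\<forall>u w. (u,w) \<in> A' \<longrightarrow> \<sigma>' w \<le> \<sigma>' u \<longrightarrow>
        (\<exists>p. is_path A' p \<and> hd p = w \<and> last p = u \<and> set p \<subseteq> V' \<and> int (length p) - 1 = h' u - h' w)"
        by blast
      define h where "h = h'(vm := int (length P'))"
      define \<sigma> where "\<sigma> = \<sigma>'(vm := Suc (\<Sum>v\<in>V'. \<sigma>' v))"
      have g1: "\<forall>i<length P. h (P!i) = int i"
      proof (intro allI impI)
        fix i assume i: "i < length P"
        show "h (P!i) = int i"
        proof (cases "i < length P'")
          case True
          then have "P!i = P'!i" "P'!i \<noteq> vm" using PP' vmP' by (auto simp: nth_append)
          then show ?thesis using h1 True h_def by simp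
        next
          case False
          then have "i = length P'" using i PP' by simp
          then show ?thesis using PP' h_def by simp
        qed
      qed
      have g2: "\<forall>u w. (u,w) \<in> A \<longrightarrow> \<sigma> w \<le> \<sigma> u \<longrightarrow>
        (\<exists>p. is_path A p \<and> hd p = w \<and> last p = u \<and> set p \<subseteq> V \<and> int (length p) - 1 = h u - h w)"
      proof (intro allI impI)
        fix u w assume uw: "(u,w) \<in> A" and s: "\<sigma> w \<le> \<sigma> u"
        have uV: "u \<in> V" and wV: "w \<in> V" using uw less.prems(2) by auto
        have uw_ne: "u \<noteq> w" using uw less.prems(3) by auto
        show "\<exists>p. is_path A p \<and> hd p = w \<and> last p = u \<and> set p \<subseteq> V \<and> int (length p) - 1 = h u - h w"
        proof (cases "u = vm")
          case True
          then have "w \<in> set P" using False uw by auto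
          then have "w \<in> set P'" using PP' uw_ne True by auto
          then obtain j where j: "j < length P'" "P'!j = w" by (auto simp: in_set_conv_nth)
          have jP: "j < length P" "P!j = w" using j PP' by (auto simp: nth_append)
          define p where "p = drop j P"
          have "is_path A p" using is_path_drop[OF pathP jP(1)] p_def by simp
          moreover have "hd p = w" using p_def jP by (simp add: hd_drop_conv_nth)
          moreover have "last p = u" using p_def jP True vm_def by simp
          moreover have "set p \<subseteq> V" using p_def less.prems(5) set_drop_subset by fastforce
          moreover have "h w = int j" using g1 jP by metis
          moreover have "h u = int (length P')" using True h_def by simp
          moreover have "length p = length P - j" using p_def by simp
          ultimately show ?thesis using PP' j by auto
        next
          case uvm: False
          show ?thesis
          proof (cases "w = vm")
            case True
            have "\<sigma>' u \<le> (\<Sum>v\<in>V'. \<sigma>' v)"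
              using uV uvm V'_def fV' by (intro member_le_sum) auto
            then show ?thesis using s True uvm \<sigma>_def by simp
          next
            case wvm: False
            have "(u,w) \<in> A'" using uw uV wV uvm wvm A'_def V'_def by auto
            moreover have "\<sigma>' w \<le> \<sigma>' u" using s uvm wvm \<sigma>_def by simp
            ultimately obtain p where p: "is_path A' p" "hd p = w" "last p = u" "set p \<subseteq> V'"
              "int (length p) - 1 = h' u - h' w" using h2 by blast
            have "is_path A p" using is_path_mono[OF p(1)] A'_def by auto
            moreover have "set p \<subseteq> V" using p(4) V'_def by auto
            ultimately show ?thesis using p uvm wvm h_def by auto
          qed
        qed
      qed
      show ?thesis using g1 g2 by blast
    qed
  qed
qed


lemma no_incr:
  fixes f :: "nat \<Rightarrow> nat"
  assumes n: "n > 0" and inc: "\<forall>j<n. f j < f ((j+1) mod n)"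
  shows False
proof -
  have "\<forall>j<n. f 0 + j \<le> f j"
  proof (intro allI impI)
    fix j assume "j < n"
    then show "f 0 + j \<le> f j"
    proof (induction j)
      case (Suc j)
      have "(j+1) mod n = Suc j" using Suc.prems by simp
      then have "f j < f (Suc j)" using inc Suc.prems by (metis Suc_lessD)
      then show ?case using Suc by simp
    qed simp
  qed
  then have a: "f 0 + (n-1) \<le> f (n-1)" using n by (metis diff_less zero_less_one)
  have "f (n-1) < f 0" using inc[rule_format, of "n-1"] n by simp
  then show False using a by simp
qed

lemma nt:
  fixes k r L :: int
  assumes "k \<ge> r" "r \<ge> 0" "r \<noteq> 1" "even (k div gcd (r - 1) k)" "L \<ge> 0"
    "(L + 1) mod k = r mod k"
  shows "L mod (2 * gcd (r - 1) k) = gcd (r - 1) k"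
proof -
  define d where "d = gcd (r - 1) k"
  have dpos: "d > 0" using assms(3) d_def by simp
  have kpos: "k > 0"
  proof (rule ccontr)
    assume "\<not> k > 0"
    then have "k = 0" "r = 0" using assms by auto
    then show False using assms by simp
  qed
  have "d dvd k" unfolding d_def by simp
  then obtain m where m: "k = d * m" by (auto elim: dvdE)
  have mk: "m = k div d" using m dpos by simp
  have "even m" using assms(4) mk d_def by simp
  then obtain t where t: "m = 2 * t" by (auto elim: evenE)
  have "d dvd (r - 1)" unfolding d_def by simp
  then obtain q where q: "r - 1 = d * q" by (auto elim: dvdE)
  have qd: "q = (r - 1) div d" using q dpos by simp
  have cop: "coprime q m" using qd mk d_def assms(3) div_gcd_coprime[of "r-1" k] by simp
  have "odd q"
  proof
    assume "even q"
    then have "2 dvd gcd q m" using t by simp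
    then show False using cop by simp
  qed
  then obtain s where s: "q = 2 * s + 1" by (auto elim: oddE)
  have kd: "k dvd (L + 1 - r)" using assms(6) by (simp add: mod_eq_dvd_iff)
  have "k = (2 * d) * t" using m t by simp
  then have "2 * d dvd k" by simp
  then have e1: "2 * d dvd (L + 1 - r)" using kd dvd_trans by blast
  have "L + 1 - r = (L - d) - 2 * d * s" using q s by (simp add: algebra_simps)
  then have e2: "2 * d dvd ((L - d) - 2 * d * s)" using e1 by metis
  have e3: "2 * d dvd 2 * d * s" by simp
  from dvd_add[OF e2 e3] have "2 * d dvd (L - d)" by simp
  then have "L mod (2*d) = d mod (2*d)" by (metis mod_eq_dvd_iff)
  also have "\<dots> = d" using dpos by simp
  finally show ?thesis using d_def by simp
qed

lemma colors:
  fixes x y d :: int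
  assumes "d > 0" "(x - y) mod (2*d) = d"
  shows "(x mod (2*d) < d) \<noteq> (y mod (2*d) < d)"
proof -
  define a where "a = y mod (2*d)"
  have a: "0 \<le> a" "a < 2*d" using assms(1) a_def by auto
  have "x mod (2*d) = (a + d) mod (2*d)"
  proof -
    have "x = (x - y) + y" by simp
    have "((x - y) mod (2*d) + y mod (2*d)) mod (2*d) = ((x - y) + y) mod (2*d)" by (rule mod_add_eq)
    then have "x mod (2*d) = ((x - y) mod (2*d) + y mod (2*d)) mod (2*d)" by simp
    then show ?thesis using assms(2) a_def by (simp add: add.commute)
  qed
  show ?thesis
  proof (cases "a < d")
    case True
    then have "(a + d) mod (2*d) = a + d" using a by simp
    then show ?thesis using True a \<open>x mod (2*d) = (a + d) mod (2*d)\<close> by (simp add: a_def[symmetric])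
  next
    case False
    have "(a + d) mod (2*d) = ((a - d) + 2*d) mod (2*d)" by (simp add: add.commute)
    also have "\<dots> = (a - d) mod (2*d)" by (rule mod_add_self2)
    also have "\<dots> = a - d" using a False by simp
    finally have "(a + d) mod (2*d) = a - d" .
    then show ?thesis using False a_def \<open>x mod (2*d) = (a + d) mod (2*d)\<close> assms(1) by simp
  qed
qed

theorem mainTheorem19:
  fixes V :: "'a set" and A :: "('a \<times> 'a) set" and k r :: int
  assumes "digraph V A"
    and "k \<ge> r" and "r \<ge> 0" and "r \<noteq> 1"
    and "strongly_connected V A"
    and "\<forall>cs. dcycle V A cs \<longrightarrow> int (length cs) mod k = r mod k"
    and "even (k div gcd (r - 1) k)"
  shows "dichromatic_number V A \<le> 2"
proof -
  from assms(1) have fin: "finite V" and AV: "A \<subseteq> V \<times> V" and loop: "\<forall>v. (v,v) \<notin> A"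
    unfolding digraph_def by auto
  define d where "d = gcd (r - 1) k"
  have dpos: "d > 0" using assms(4) d_def by simp
  have ex: "\<exists>(\<sigma>::'a \<Rightarrow> nat) (h::'a \<Rightarrow> int).
     (\<forall>u w. (u,w) \<in> A \<longrightarrow> \<sigma> w \<le> \<sigma> u \<longrightarrow>
        (\<exists>p. is_path A p \<and> hd p = w \<and> last p = u \<and> set p \<subseteq> V \<and> int (length p) - 1 = h u - h w))"
    using dfs[OF fin AV loop, of "[]"] by simp
  then obtain \<sigma> :: "'a \<Rightarrow> nat" and h :: "'a \<Rightarrow> int" where
    H: "\<forall>u w. (u,w) \<in> A \<longrightarrow> \<sigma> w \<le> \<sigma> u \<longrightarrow>
        (\<exists>p. is_path A p \<and> hd p = w \<and> last p = u \<and> set p \<subseteq> V \<and> int (length p) - 1 = h u - h w)"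
    by blast
  define c where "c = (\<lambda>v. if h v mod (2*d) < d then 0 else (1::nat))"
  have key: "c u \<noteq> c w" if uw: "(u,w) \<in> A" and s: "\<sigma> w \<le> \<sigma> u" for u w
  proof -
    obtain p where p: "is_path A p" "hd p = w" "last p = u" "set p \<subseteq> V"
      "int (length p) - 1 = h u - h w" using H uw s by blast
    have pne: "p \<noteq> []" using p(1) unfolding is_path_def by simp
    have dc: "dcycle V A p"
      unfolding dcycle_def
    proof (intro conjI allI impI)
      show "p \<noteq> []" by (rule pne)
      show "distinct p" using p(1) unfolding is_path_def by simp
      show "set p \<subseteq> V" by (rule p(4))
      fix i assume i: "i < length p"
      show "(p!i, p!((i+1) mod length p)) \<in> A"
      proof (cases "Suc i < length p")
        case True
        then have "(i+1) mod length p = Suc i" by simp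
        then show ?thesis using True p(1) unfolding is_path_def by simp
      next
        case False
        then have ii: "i = length p - 1" using i by simp
        then have "(i+1) mod length p = 0" using i pne by (simp add: Suc_diff_1)
        moreover have "p!i = u" using ii p(3) pne by (simp add: last_conv_nth)
        moreover have "p!0 = w" using p(2) pne by (simp add: hd_conv_nth)
        ultimately show ?thesis using uw by simp
      qed
    qed
    then have m: "int (length p) mod k = r mod k" using assms(6) by blast
    define L where "L = h u - h w"
    have "length p \<ge> 1" using pne by (cases p) auto
    then have L0: "L \<ge> 0" using p(5) L_def by linarith
    have "L + 1 = int (length p)" using p(5) L_def by linarith
    then have "(L + 1) mod k = r mod k" using m by simp
    then have "L mod (2 * d) = d" using nt[OF assms(2,3,4,7) L0] d_def by simp
    then have "(h u mod (2*d) < d) \<noteq> (h w mod (2*d) < d)" using colors[OF dpos] L_def by simp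
    then show ?thesis unfolding c_def by auto
  qed
  have col: "acyclic_coloring V A c 2"
    unfolding acyclic_coloring_def
  proof (intro conjI ballI allI impI)
    fix v show "c v < 2" unfolding c_def by simp
  next
    fix i :: nat assume "i < 2"
    show "acyclic_digraph {v\<in>V. c v = i} (induced_arcs A {v\<in>V. c v = i})"
      unfolding acyclic_digraph_def
    proof
      assume "\<exists>cs. dcycle {v\<in>V. c v = i} (induced_arcs A {v\<in>V. c v = i}) cs"
      then obtain cs where cs: "dcycle {v\<in>V. c v = i} (induced_arcs A {v\<in>V. c v = i}) cs" by blast
      define n where "n = length cs"
      have npos: "n > 0" using cs n_def unfolding dcycle_def by simp
      have cyc: "\<forall>j<n. (cs!j, cs!((j+1) mod n)) \<in> induced_arcs A {v\<in>V. c v = i}"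
        using cs n_def unfolding dcycle_def by blast
      have arcs: "(cs!j, cs!((j+1) mod n)) \<in> A \<and> c (cs!j) = i \<and> c (cs!((j+1) mod n)) = i"
        if jn: "j < n" for j
      proof -
        have "(cs!j, cs!((j+1) mod n)) \<in> A \<inter> ({v\<in>V. c v = i} \<times> {v\<in>V. c v = i})"
          using cyc jn unfolding induced_arcs_def by blast
        then show ?thesis by simp
      qed
      have "\<exists>j<n. \<sigma> (cs!((j+1) mod n)) \<le> \<sigma> (cs!j)"
      proof (rule ccontr)
        assume "\<not> (\<exists>j<n. \<sigma> (cs!((j+1) mod n)) \<le> \<sigma> (cs!j))"
        then have "\<forall>j<n. (\<lambda>j. \<sigma> (cs!j)) j < (\<lambda>j. \<sigma> (cs!j)) ((j+1) mod n)"
          by (simp add: not_le)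
        then show False by (rule no_incr[OF npos])
      qed
      then obtain j where j: "j < n" "\<sigma> (cs!((j+1) mod n)) \<le> \<sigma> (cs!j)" by blast
      have a: "(cs!j, cs!((j+1) mod n)) \<in> A" "c (cs!j) = i" "c (cs!((j+1) mod n)) = i"
        using arcs[OF j(1)] by simp_all
      have "c (cs!j) \<noteq> c (cs!((j+1) mod n))" by (rule key[OF a(1) j(2)])
      then show False using a(2,3) by simp
    qed
  qed
  show ?thesis unfolding dichromatic_number_def using col by (intro Least_le) blast
qed

end
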